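(* Let $s,k$ be positive integers with $s>2\cdot10^6$, and let $n=\lceil 3e(s+1)k\rceil$. Let $\mathcal F_1,\ldots,\mathcal F_{s+1}\subset\binom{[n]}{k}$ be shifted, cross-dependent families with $|\mathcal F_i|\ge\binom{n}{k}-\binom{n-s}{k}$ for all $i\in[s+1]$. Then there is a set $U\subset[s+1]$ with $|U|\ge 2(s+1)/3$ such that for each $i\in U$, $$|\mathcal F_i(\emptyset)|\le(3s+2)\,|\mathcal F_i(s+1)|.$$
   Context: $[n]=\{1,\ldots,n\}$; $\binom{X}{k}$ is the family of all $k$-subsets of $X$. Families $\mathcal F_1,\ldots,\mathcal F_{s+1}$ are cross-dependent if there are no pairwise disjoint $F_1,\ldots,F_{s+1}$ with $F_i\in\mathcal F_i$ for all $i$. A family $\mathcal F\subset\binom{[n]}{k}$ is shifted if whenever $A\in\mathcal F$ and $B$ is obtained from $A$ by replacing some elements with smaller elements, then $B\in\mathcal F$. For a family $\mathcal G$: $\mathcal G(\emptyset):=\{A\in\mathcal G: A\cap[s+1]=\emptyset\}$ and $\mathcal G(s+1):=\{A\setminus\{s+1\}: A\in\mathcal G,\ A\cap[s+1]=\{s+1\}\}$. *)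

theory Defs
  imports Complex_Main
begin

definition ksets :: "'a set \<Rightarrow> nat \<Rightarrow> 'a set set" where
  "ksets X k = {A. A \<subseteq> X \<and> card A = k}"

definition shifted :: "nat \<Rightarrow> nat \<Rightarrow> nat set set \<Rightarrow> bool" where
  "shifted n k F \<longleftrightarrow>
     F \<subseteq> ksets {1..n} k \<and>
     (\<forall>A \<in> F. \<forall>B. B \<subseteq> {1..n} \<longrightarrow> (\<exists>f. bij_betw f A B \<and> (\<forall>x\<in>A. f x \<le> x)) \<longrightarrow> B \<in> F)"

definition cross_dependent :: "nat \<Rightarrow> (nat \<Rightarrow> 'a set set) \<Rightarrow> bool" where
  "cross_dependent s F \<longleftrightarrow>
     \<not> (\<exists>G. (\<forall>i\<in>{1..s+1}. G i \<in> F i) \<and>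
            (\<forall>i\<in>{1..s+1}. \<forall>j\<in>{1..s+1}. i \<noteq> j \<longrightarrow> G i \<inter> G j = {}))"

definition fam_empty :: "nat \<Rightarrow> nat set set \<Rightarrow> nat set set" where
  "fam_empty s G = {A \<in> G. A \<inter> {1..s+1} = {}}"

definition fam_last :: "nat \<Rightarrow> nat set set \<Rightarrow> nat set set" where
  "fam_last s G = {A - {s+1} | A. A \<in> G \<and> A \<inter> {1..s+1} = {s+1}}"

end

theory Submission
  imports Defs
begin


lemma dom_bij:
  fixes g :: "nat \<Rightarrow> nat"
  shows "\<lbrakk> \<forall>i j. 1 \<le> i \<longrightarrow> i < j \<longrightarrow> j \<le> k \<longrightarrow> g i < g j; finite A; card A = k;
          \<forall>j\<in>{1..k}. card (A \<inter> {..<g j}) < j \<rbrakk>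
         \<Longrightarrow> \<exists>f. bij_betw f A (g ` {1..k}) \<and> (\<forall>x\<in>A. f x \<le> x)"
proof (induction k arbitrary: A)
  case 0
  then show ?case by (auto simp: bij_betw_def)
next
  case (Suc k)
  have ne: "A \<noteq> {}" using Suc.prems by auto
  define a where "a = Max A"
  have aA: "a \<in> A" using ne Suc.prems a_def by auto
  have amax: "\<forall>x\<in>A. x \<le> a" using Suc.prems a_def by auto
  have ga: "g (Suc k) \<le> a"
  proof (rule ccontr)
    assume "\<not> g (Suc k) \<le> a"
    then have "A \<inter> {..<g (Suc k)} = A" using amax by auto
    moreover have "card (A \<inter> {..<g (Suc k)}) < Suc k" using Suc.prems(4) by auto
    ultimately show False using Suc.prems(3) by simp
  qed
  define A' where "A' = A - {a}"
  have A'c: "card A' = k" using Suc.prems aA A'_def by auto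
  have A'f: "finite A'" using Suc.prems A'_def by auto
  have cond: "\<forall>j\<in>{1..k}. card (A' \<inter> {..<g j}) < j"
  proof
    fix j assume j: "j \<in> {1..k}"
    have "card (A' \<inter> {..<g j}) \<le> card (A \<inter> {..<g j})"
      using Suc.prems(2) A'_def by (intro card_mono) auto
    also have "\<dots> < j" using Suc.prems(4) j by auto
    finally show "card (A' \<inter> {..<g j}) < j" .
  qed
  have mono': "\<forall>i j. 1 \<le> i \<longrightarrow> i < j \<longrightarrow> j \<le> k \<longrightarrow> g i < g j" using Suc.prems(1) by auto
  obtain f where f: "bij_betw f A' (g ` {1..k})" "\<forall>x\<in>A'. f x \<le> x"
    using Suc.IH[OF mono' A'f A'c cond] by blast
  define f' where "f' = f(a := g (Suc k))"
  have notin: "g (Suc k) \<notin> g ` {1..k}"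
  proof
    assume "g (Suc k) \<in> g ` {1..k}"
    then obtain x where x: "x \<in> {1..k}" "g (Suc k) = g x" by auto
    then have "g x < g (Suc k)" using Suc.prems(1) by (metis atLeastAtMost_iff le_SucI le_imp_less_Suc order_refl)
    then show False using x by simp
  qed
  have eqs: "g ` {1..Suc k} = insert (g (Suc k)) (g ` {1..k})"
    by (auto simp: atLeastAtMostSuc_conv)
  have "bij_betw f' (insert a A') (insert (g (Suc k)) (g ` {1..k}))"
  proof -
    have "bij_betw f' A' (g ` {1..k})"
      using f(1) unfolding A'_def f'_def by (rule bij_betw_cong[THEN iffD1, rotated]) auto
    moreover have "a \<notin> A'" "f' a \<notin> g ` {1..k}" using notin A'_def f'_def by auto
    ultimately have "bij_betw f' (A' \<union> {a}) (g ` {1..k} \<union> {f' a})"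
      by (intro notIn_Un_bij_betw) auto
    then show ?thesis using f'_def by simp
  qed
  moreover have "insert a A' = A" using aA A'_def by auto
  ultimately have "bij_betw f' A (g ` {1..Suc k})" using eqs by simp
  moreover have "\<forall>x\<in>A. f' x \<le> x" using f(2) ga A'_def f'_def by auto
  ultimately show ?case by blast
qed



definition shadow :: "nat set set \<Rightarrow> nat set set" where
  "shadow G = {B. \<exists>A\<in>G. \<exists>x\<in>A. B = A - {x}}"

lemma shadow_sub: "(\<forall>A\<in>G. A \<subseteq> X) \<Longrightarrow> B \<in> shadow G \<Longrightarrow> B \<subseteq> X"
  unfolding shadow_def by auto

lemma finite_fam: "finite X \<Longrightarrow> (\<forall>A\<in>G. A \<subseteq> X) \<Longrightarrow> finite G"
  by (meson PowI finite_Pow_iff finite_subset subsetI)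

lemma finite_shadow: "finite X \<Longrightarrow> (\<forall>A\<in>G. A \<subseteq> X) \<Longrightarrow> finite (shadow G)"
  by (rule finite_fam[of X]) (auto dest: shadow_sub)

lemma LYM:
  assumes X: "finite X" and G: "\<forall>A\<in>G. A \<subseteq> X \<and> card A = k" and k: "k \<ge> 1"
  shows "k * card G \<le> (card X + 1 - k) * card (shadow G)"
proof -
  have fG: "finite G" using finite_fam[OF X] G by auto
  have fS: "finite (shadow G)" using finite_shadow[OF X] G by auto
  define P where "P = Sigma G (\<lambda>A. (\<lambda>x. A - {x}) ` A)"
  have "card P = (\<Sum>A\<in>G. card ((\<lambda>x. A - {x}) ` A))"
    unfolding P_def using fG G X by (intro card_SigmaI) (auto intro: finite_subset)
  also have "\<dots> = (\<Sum>A\<in>G. k)"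
  proof (rule sum.cong)
    fix A assume A: "A \<in> G"
    have "inj_on (\<lambda>x. A - {x}) A" by (auto simp: inj_on_def)
    then show "card ((\<lambda>x. A - {x}) ` A) = k" using A G by (simp add: card_image)
  qed simp
  finally have cP: "card P = k * card G" by simp
  define Q where "Q = Sigma (shadow G) (\<lambda>B. X - B)"
  have "P \<subseteq> (\<lambda>(B, x). (insert x B, B)) ` Q"
  proof
    fix p assume "p \<in> P"
    then obtain A x where p: "p = (A, A - {x})" "A \<in> G" "x \<in> A" unfolding P_def by auto
    then have "(A - {x}, x) \<in> Q" using G unfolding Q_def shadow_def by auto
    moreover have "A = insert x (A - {x})" using p by auto
    ultimately show "p \<in> (\<lambda>(B, x). (insert x B, B)) ` Q" using p by force
  qed
  then have "card P \<le> card ((\<lambda>(B, x). (insert x B, B)) ` Q)"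
    using fS X unfolding Q_def by (intro card_mono) auto
  also have "\<dots> \<le> card Q" by (rule card_image_le) (use fS X in \<open>auto simp: Q_def\<close>)
  also have "card Q = (\<Sum>B\<in>shadow G. card (X - B))"
    unfolding Q_def using fS X by (intro card_SigmaI) auto
  also have "\<dots> = (\<Sum>B\<in>shadow G. card X + 1 - k)"
  proof (rule sum.cong)
    fix B assume "B \<in> shadow G"
    then obtain A x where B: "A \<in> G" "x \<in> A" "B = A - {x}" unfolding shadow_def by auto
    then have "card B = k - 1" "B \<subseteq> X" using G by auto
    then show "card (X - B) = card X + 1 - k" using X k by (simp add: card_Diff_subset finite_subset)
  qed simp
  finally show ?thesis using cP by (simp add: mult.commute)
qed

lemma shadow_base:
  assumes c: "c \<ge> 1" and G: "\<forall>A\<in>G. A \<subseteq> {ofs<..m} \<and> card A = k"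
    and P: "\<forall>A\<in>G. \<exists>j\<in>{1..k}. j \<le> card (A \<inter> {ofs<..<ofs+c*j})"
    and m: "m < ofs + c * k"
  shows "card G \<le> (c - 1) * card (shadow G)"
proof (cases "k = 0")
  case True
  then have "G = {}" using P by auto
  then show ?thesis by simp
next
  case False
  have "k * card G \<le> (card {ofs<..m} + 1 - k) * card (shadow G)"
    using LYM[of "{ofs<..m}" G k] G False by auto
  also have "\<dots> \<le> ((c - 1) * k) * card (shadow G)"
  proof (rule mult_right_mono)
    have "card {ofs<..m} = m - ofs" by simp
    moreover have "c * k \<ge> 1" using c False by simp
    then have "m - ofs + 1 \<le> c * k" using m by arith
    then have "m - ofs + 1 - k \<le> c * k - k" by (rule diff_le_mono)
    ultimately show "card {ofs<..m} + 1 - k \<le> (c - 1) * k" by (simp add: diff_mult_distrib)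
  qed simp
  finally have "k * card G \<le> k * ((c - 1) * card (shadow G))" by (simp add: ac_simps)
  then show ?thesis using False by simp
qed

lemma shadow_bound:
  assumes c: "c \<ge> 1"
  shows "\<forall>A\<in>G. A \<subseteq> {ofs<..m} \<and> card A = k \<Longrightarrow>
         \<forall>A\<in>G. \<exists>j\<in>{1..k}. j \<le> card (A \<inter> {ofs<..<ofs+c*j}) \<Longrightarrow>
         card G \<le> (c - 1) * card (shadow G)"
proof (induction m arbitrary: G k)
  case 0
  show ?case
  proof (cases "0 < ofs + c * k")
    case True then show ?thesis by (rule shadow_base[OF c 0(1,2)])
  next
    case False
    then have "k = 0" using c by simp
    then have "G = {}" using 0(2) by auto
    then show ?thesis by simp
  qed
next
  case (Suc m)
  show ?case
  proof (cases "Suc m < ofs + c * k")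
    case True then show ?thesis by (rule shadow_base[OF c Suc(2,3)])
  next
    case False
    note big = this
    show ?thesis
    proof (cases "k = 0")
      case True
      then have "G = {}" using Suc(3) by auto
      then show ?thesis by simp
    next
      case False
      define M where "M = Suc m"
      define G0 where "G0 = {A\<in>G. M \<notin> A}"
      define G1' where "G1' = {A\<in>G. M \<in> A}"
      define G1 where "G1 = (\<lambda>A. A - {M}) ` G1'"
      have fG: "finite G" using finite_fam[of "{ofs<..Suc m}" G] Suc(2) by auto
      have G0s: "\<forall>A\<in>G0. A \<subseteq> {ofs<..m} \<and> card A = k"
        using Suc(2) unfolding G0_def M_def by (auto simp: subset_iff less_Suc_eq_le le_less)
      have G0p: "\<forall>A\<in>G0. \<exists>j\<in>{1..k}. j \<le> card (A \<inter> {ofs<..<ofs+c*j})"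
        using Suc(3) unfolding G0_def by auto
      have IH0: "card G0 \<le> (c - 1) * card (shadow G0)" using Suc.IH[OF G0s G0p] .
      have G1s: "\<forall>C\<in>G1. C \<subseteq> {ofs<..m} \<and> card C = k - 1"
        using Suc(2) unfolding G1_def G1'_def M_def by (auto simp: subset_iff less_Suc_eq_le le_less)
      have G1p: "\<forall>C\<in>G1. \<exists>j\<in>{1..k-1}. j \<le> card (C \<inter> {ofs<..<ofs+c*j})"
      proof
        fix C assume "C \<in> G1"
        then obtain A where A: "A \<in> G" "M \<in> A" "C = A - {M}" unfolding G1_def G1'_def by auto
        obtain j where j: "j \<in> {1..k}" "j \<le> card (A \<inter> {ofs<..<ofs+c*j})" using Suc(3) A by auto
        have "c * j \<le> c * k" using j by simp
        then have "ofs + c * j \<le> M" using big M_def by linarith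
        then have "M \<notin> {ofs<..<ofs+c*j}" by simp
        then have eq: "C \<inter> {ofs<..<ofs+c*j} = A \<inter> {ofs<..<ofs+c*j}" using A by auto
        have fA: "finite A" using Suc(2) A by (meson finite_greaterThanAtMost finite_subset)
        have "card (C \<inter> {ofs<..<ofs+c*j}) \<le> card C" using A fA by (intro card_mono) auto
        also have "card C = k - 1" using A Suc(2) fA by auto
        finally have "j \<le> k - 1" using j eq by simp
        then have "j \<in> {1..k-1}" using j(1) by simp
        moreover have "j \<le> card (C \<inter> {ofs<..<ofs+c*j})" using j(2) eq by simp
        ultimately
        show "\<exists>j\<in>{1..k-1}. j \<le> card (C \<inter> {ofs<..<ofs+c*j})" by (rule rev_bexI)
      qed
      have IH1: "card G1 \<le> (c - 1) * card (shadow G1)" using Suc.IH[OF G1s G1p] .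
      have "card G = card G0 + card G1'"
      proof -
        have "G = G0 \<union> G1'" "G0 \<inter> G1' = {}" unfolding G0_def G1'_def by auto
        moreover have "finite G0" "finite G1'" using fG unfolding G0_def G1'_def by auto
        ultimately show ?thesis by (simp add: card_Un_disjoint)
      qed
      moreover have "card G1 = card G1'"
        unfolding G1_def
      proof (rule card_image)
        show "inj_on (\<lambda>A. A - {M}) G1'" unfolding G1'_def inj_on_def
        proof (intro ballI impI)
          fix A B assume "A \<in> {A \<in> G. M \<in> A}" "B \<in> {A \<in> G. M \<in> A}" "A - {M} = B - {M}"
          then have "insert M (A - {M}) = insert M (B - {M})" "M \<in> A" "M \<in> B" by auto
          then show "A = B" by (simp add: insert_absorb)
        qed
      qed
      ultimately have cardG: "card G = card G0 + card G1" by simp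
      have fS0: "finite (shadow G0)" using finite_shadow[of "{ofs<..m}" G0] G0s by auto
      have fS1: "finite (shadow G1)" using finite_shadow[of "{ofs<..m}" G1] G1s by auto
      have fS: "finite (shadow G)" using finite_shadow[of "{ofs<..Suc m}" G] Suc(2) by auto
      have sub: "shadow G0 \<union> insert M ` shadow G1 \<subseteq> shadow G"
      proof
        fix B assume "B \<in> shadow G0 \<union> insert M ` shadow G1"
        then show "B \<in> shadow G"
        proof
          assume "B \<in> shadow G0" then show ?thesis unfolding shadow_def G0_def by auto
        next
          assume "B \<in> insert M ` shadow G1"
          then obtain D where D: "D \<in> shadow G1" "B = insert M D" by auto
          then obtain C x where C: "C \<in> G1" "x \<in> C" "D = C - {x}" unfolding shadow_def by auto
          then obtain A where A: "A \<in> G" "M \<in> A" "C = A - {M}" unfolding G1_def G1'_def by auto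
          have "B = A - {x}" using A C D by auto
          moreover have "x \<in> A" using A C by auto
          ultimately show ?thesis using A unfolding shadow_def by auto
        qed
      qed
      have disj: "shadow G0 \<inter> insert M ` shadow G1 = {}"
      proof (rule ccontr)
        assume "shadow G0 \<inter> insert M ` shadow G1 \<noteq> {}"
        then obtain B where "B \<in> shadow G0" "M \<in> B" by auto
        then show False unfolding shadow_def G0_def by auto
      qed
      have inj: "inj_on (insert M) (shadow G1)"
      proof -
        have "\<forall>D\<in>shadow G1. M \<notin> D" using G1s shadow_sub[of G1 "{ofs<..m}"] M_def by force
        then show ?thesis unfolding inj_on_def by (metis Diff_insert_absorb)
      qed
      have "card (shadow G0) + card (shadow G1) = card (shadow G0 \<union> insert M ` shadow G1)"
        using fS0 fS1 disj inj by (simp add: card_Un_disjoint card_image)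
      also have "\<dots> \<le> card (shadow G)" using sub fS by (intro card_mono)
      finally have "card (shadow G0) + card (shadow G1) \<le> card (shadow G)" .
      then show ?thesis using cardG IH0 IH1
      proof -
        have "card G \<le> (c - 1) * card (shadow G0) + (c - 1) * card (shadow G1)" using cardG IH0 IH1 by linarith
        also have "\<dots> = (c - 1) * (card (shadow G0) + card (shadow G1))" by (simp add: add_mult_distrib2)
        also have "\<dots> \<le> (c - 1) * card (shadow G)" using \<open>card (shadow G0) + card (shadow G1) \<le> card (shadow G)\<close> by simp
        finally show ?thesis .
      qed
    qed
  qed
qed



lemma count_many:
  assumes X: "finite X" and Y: "Y \<subseteq> X"
  shows "card {A. A \<subseteq> X \<and> card A = k \<and> j \<le> card (A \<inter> Y)}
           \<le> (card Y choose j) * ((card X - j) choose (k - j))"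
proof -
  define SS where "SS = {S. S \<subseteq> Y \<and> card S = j}"
  define TT where "TT = (\<lambda>S. {T. T \<subseteq> X - S \<and> card T = k - j})"
  have fY: "finite Y" using X Y finite_subset by auto
  have fSS: "finite SS" unfolding SS_def using fY by simp
  have sub: "{A. A \<subseteq> X \<and> card A = k \<and> j \<le> card (A \<inter> Y)} \<subseteq> (\<Union>S\<in>SS. (\<lambda>T. S \<union> T) ` TT S)"
  proof
    fix A assume A: "A \<in> {A. A \<subseteq> X \<and> card A = k \<and> j \<le> card (A \<inter> Y)}"
    then have "j \<le> card (A \<inter> Y)" by simp
    then obtain S where S: "S \<subseteq> A \<inter> Y" "card S = j" "finite S"
      by (rule obtain_subset_with_card_n)
    have fA: "finite A" using A X finite_subset by auto
    have "A - S \<in> TT S" unfolding TT_def using A S fA by (auto simp: card_Diff_subset)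
    moreover have "A = S \<union> (A - S)" using S by auto
    moreover have "S \<in> SS" using S unfolding SS_def by auto
    ultimately show "A \<in> (\<Union>S\<in>SS. (\<lambda>T. S \<union> T) ` TT S)" by blast
  qed
  have "card {A. A \<subseteq> X \<and> card A = k \<and> j \<le> card (A \<inter> Y)} \<le> card (\<Union>S\<in>SS. (\<lambda>T. S \<union> T) ` TT S)"
  proof (rule card_mono[OF _ sub])
    show "finite (\<Union>S\<in>SS. (\<lambda>T. S \<union> T) ` TT S)" unfolding TT_def using fSS X by auto
  qed
  also have "\<dots> \<le> (\<Sum>S\<in>SS. card ((\<lambda>T. S \<union> T) ` TT S))" by (rule card_UN_le[OF fSS])
  also have "\<dots> \<le> (\<Sum>S\<in>SS. card (TT S))" by (intro sum_mono card_image_le) (auto simp: TT_def X)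
  also have "\<dots> = (\<Sum>S\<in>SS. (card X - j) choose (k - j))"
  proof (rule sum.cong)
    fix S assume "S \<in> SS"
    then have "S \<subseteq> X" "card S = j" using Y unfolding SS_def by auto
    then show "card (TT S) = (card X - j) choose (k - j)"
      unfolding TT_def using X by (simp add: n_subsets card_Diff_subset finite_subset)
  qed simp
  also have "\<dots> = (card Y choose j) * ((card X - j) choose (k - j))"
    using fY by (simp add: SS_def n_subsets)
  finally show ?thesis .
qed

lemma ksets_card: "finite X \<Longrightarrow> card (ksets X k) = card X choose k"
  unfolding ksets_def by (rule n_subsets)

definition Bad :: "nat \<Rightarrow> nat \<Rightarrow> nat \<Rightarrow> nat \<Rightarrow> nat set set" where
  "Bad n k q t = {A \<in> ksets {1..n} k. \<exists>j\<in>{1..k}. j \<le> card (A \<inter> {..<q + t*(j-1)})}"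

lemma Bad_card:
  assumes q: "1 \<le> q" "q \<le> n" and k: "k \<ge> 1"
  shows "card (Bad n k q t) \<le> ((n choose k) - ((n + 1 - q) choose k))
           + (\<Sum>j=2..k. ((q + t*(j-1) - 1) choose j) * ((n - j) choose (k - j)))"
proof -
  define B where "B = (\<lambda>j. {A \<in> ksets {1..n} k. j \<le> card (A \<inter> {..<q + t*(j-1)})})"
  have fin: "finite (B j)" for j unfolding B_def ksets_def by auto
  have "Bad n k q t = B 1 \<union> (\<Union>j\<in>{2..k}. B j)"
  proof
    show "Bad n k q t \<subseteq> B 1 \<union> (\<Union>j\<in>{2..k}. B j)"
    proof
      fix A assume "A \<in> Bad n k q t"
      then obtain j where A: "A \<in> ksets {1..n} k" "j \<in> {1..k}" "j \<le> card (A \<inter> {..<q + t*(j-1)})"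
        unfolding Bad_def by blast
      show "A \<in> B 1 \<union> (\<Union>j\<in>{2..k}. B j)"
      proof (cases "j = 1")
        case True then show ?thesis using A unfolding B_def by auto
      next
        case False then have "j \<in> {2..k}" using A(2) by auto
        then show ?thesis using A unfolding B_def by blast
      qed
    qed
  next
    have *: "B j \<subseteq> Bad n k q t" if "j \<in> {1..k}" for j
    proof
      fix A assume "A \<in> B j"
      then have "A \<in> ksets {1..n} k" "j \<le> card (A \<inter> {..<q + t*(j-1)})" unfolding B_def by auto
      then show "A \<in> Bad n k q t" unfolding Bad_def using that by blast
    qed
    show "B 1 \<union> (\<Union>j\<in>{2..k}. B j) \<subseteq> Bad n k q t"
    proof (rule Un_least)
      show "B 1 \<subseteq> Bad n k q t" using *[of 1] k by simp
      show "(\<Union>j\<in>{2..k}. B j) \<subseteq> Bad n k q t" using * by (intro UN_least) simp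
    qed
  qed
  then have "card (Bad n k q t) \<le> card (B 1) + card (\<Union>j\<in>{2..k}. B j)"
    by (simp add: card_Un_le)
  also have "card (\<Union>j\<in>{2..k}. B j) \<le> (\<Sum>j=2..k. card (B j))" by (rule card_UN_le) simp
  also have "\<dots> \<le> (\<Sum>j=2..k. ((q + t*(j-1) - 1) choose j) * ((n - j) choose (k - j)))"
  proof (rule sum_mono)
    fix j assume j: "j \<in> {2..k}"
    have "B j = {A. A \<subseteq> {1..n} \<and> card A = k \<and> j \<le> card (A \<inter> ({1..n} \<inter> {..<q + t*(j-1)}))}"
      unfolding B_def ksets_def by (auto simp: Int_assoc[symmetric] Int_absorb2)
    also have "card \<dots> \<le> (card ({1..n} \<inter> {..<q + t*(j-1)}) choose j) * ((card {1..n} - j) choose (k - j))"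
      by (rule count_many) auto
    also have "\<dots> \<le> ((q + t*(j-1) - 1) choose j) * ((n - j) choose (k - j))"
    proof -
      have "{1..n} \<inter> {..<q + t*(j-1)} \<subseteq> {1..<q + t*(j-1)}" by auto
      then have "card ({1..n} \<inter> {..<q + t*(j-1)}) \<le> q + t*(j-1) - 1"
        by (metis card_atLeastLessThan card_mono finite_atLeastLessThan)
      then have "card ({1..n} \<inter> {..<q + t*(j-1)}) choose j \<le> (q + t*(j-1) - 1) choose j"
        by (rule binomial_right_mono)
      then show ?thesis by (simp add: mult_le_mono1)
    qed
    finally show "card (B j) \<le> ((q + t*(j-1) - 1) choose j) * ((n - j) choose (k - j))" .
  qed
  also have "card (B 1) = (n choose k) - ((n + 1 - q) choose k)"
  proof -
    have "B 1 = ksets {1..n} k - ksets {q..n} k"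
    proof (intro set_eqI iffI)
      fix A assume "A \<in> B 1"
      then have A: "A \<subseteq> {1..n}" "card A = k" "1 \<le> card (A \<inter> {..<q})" unfolding B_def ksets_def by auto
      then have "A \<inter> {..<q} \<noteq> {}" by auto
      then have "\<not> A \<subseteq> {q..n}" by auto
      then show "A \<in> ksets {1..n} k - ksets {q..n} k" using A unfolding ksets_def by auto
    next
      fix A assume "A \<in> ksets {1..n} k - ksets {q..n} k"
      then have A: "A \<subseteq> {1..n}" "card A = k" "\<not> A \<subseteq> {q..n}" unfolding ksets_def by auto
      then obtain x where x: "x \<in> A" "x < q" by (meson atLeastAtMost_iff not_le subsetD subsetI)
      have "finite A" using A finite_subset by auto
      then have "A \<inter> {..<q} \<noteq> {}" "finite (A \<inter> {..<q})" using x by auto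
      then have "1 \<le> card (A \<inter> {..<q})" by (simp add: Suc_le_eq card_gt_0_iff)
      then show "A \<in> B 1" using A unfolding B_def ksets_def by auto
    qed
    moreover have "ksets {q..n} k \<subseteq> ksets {1..n} k" unfolding ksets_def using q by auto
    ultimately have "card (B 1) = card (ksets {1..n} k) - card (ksets {q..n} k)"
      by (simp add: card_Diff_subset ksets_def)
    then show ?thesis by (simp add: ksets_card)
  qed
  finally show ?thesis by simp
qed



lemma binom_ratio:
  assumes "k \<le> n"
  shows "1 \<le> j \<Longrightarrow> j \<le> k \<Longrightarrow>
    real ((n-j) choose (k-j)) \<le> real ((n-1) choose (k-1)) * (real k / real n)^(j-1)"
proof (induction j)
  case 0 then show ?case by simp
next
  case (Suc j)
  show ?case
  proof (cases "j = 0")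
    case True then show ?thesis by simp
  next
    case False
    then have IH: "real ((n-j) choose (k-j)) \<le> real ((n-1) choose (k-1)) * (real k / real n)^(j-1)"
      using Suc by simp
    have jk: "j < k" using Suc by simp
    have id: "(n - j) * ((n - Suc j) choose (k - Suc j)) = ((n - j) choose (k - j)) * (k - j)"
    proof -
      have "Suc (n - Suc j) * ((n - Suc j) choose (k - Suc j)) = (Suc (n - Suc j) choose Suc (k - Suc j)) * Suc (k - Suc j)"
        by (rule Suc_times_binomial_eq)
      moreover have "Suc (n - Suc j) = n - j" "Suc (k - Suc j) = k - j" using jk assms by auto
      ultimately show ?thesis by simp
    qed
    have npos: "real n - real j > 0" using jk assms by simp
    have "real ((n - Suc j) choose (k - Suc j)) = real ((n - j) choose (k - j)) * (real k - real j) / (real n - real j)"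
    proof -
      have "real (n - j) * real ((n - Suc j) choose (k - Suc j)) = real ((n - j) choose (k - j)) * real (k - j)"
        using id by (metis of_nat_mult)
      moreover have "real (n - j) = real n - real j" "real (k - j) = real k - real j" using jk assms by auto
      ultimately show ?thesis using npos by (simp add: field_simps)
    qed
    also have "\<dots> = real ((n - j) choose (k - j)) * ((real k - real j) / (real n - real j))" by simp
    also have "\<dots> \<le> real ((n - j) choose (k - j)) * (real k / real n)"
    proof (rule mult_left_mono)
      have "real j * real k \<le> real j * real n" using assms by (simp add: mult_left_mono)
      then have "(real k - real j) * real n \<le> real k * (real n - real j)" by (simp add: algebra_simps)
      moreover have "real n > 0" using npos by simp
      ultimately show "(real k - real j) / (real n - real j) \<le> real k / real n"
        using npos by (simp add: divide_simps)
    qed simp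
    also have "\<dots> \<le> real ((n-1) choose (k-1)) * (real k / real n)^(j-1) * (real k / real n)"
      using IH by (rule mult_right_mono) simp
    also have "\<dots> = real ((n-1) choose (k-1)) * (real k / real n)^(Suc j - 1)"
      using False by (cases j) auto
    finally show ?thesis .
  qed
qed

lemma binom_le_pow_fact: "real (L choose j) \<le> real L ^ j / fact j"
proof (cases "j \<le> L")
  case True
  have "(fact j::nat) * fact (L - j) * (L choose j) = fact L" using binomial_fact_lemma[OF True] .
  then have "(fact L::nat) = ((L choose j) * fact j) * fact (L - j)" by (simp add: ac_simps)
  then have "(L choose j) * fact j = (fact L::nat) div fact (L - j)" by simp
  also have "\<dots> \<le> L ^ j" by (rule fact_div_fact_le_pow[OF True])
  finally have "real ((L choose j) * fact j) \<le> real (L ^ j)" by (simp only: of_nat_le_iff)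
  then have "real (L choose j) * fact j \<le> real L ^ j" by simp
  then show ?thesis by (simp add: field_simps)
next
  case False then have "real (L choose j) = 0" by (simp add: not_le)
  moreover have "0 \<le> real L ^ j / fact j" by simp
  ultimately show ?thesis by linarith
qed

lemma pow_self_le: "j \<ge> 1 \<Longrightarrow> real j ^ j \<le> exp (real j - 1) * fact j"
proof (induction j rule: nat_induct_at_least)
  case base then show ?case by simp
next
  case (Suc j)
  have jp: "real j > 0" using Suc by simp
  have "(1 + 1 / real j) ^ j \<le> exp (1 / real j) ^ j"
    by (rule power_mono) (use jp in auto)
  also have "\<dots> = exp 1" using jp by (simp add: exp_of_nat_mult[symmetric])
  finally have e: "(1 + 1 / real j) ^ j \<le> exp 1" .
  have jj: "real j * (1 + 1 / real j) = real (Suc j)" using jp by (simp add: field_simps)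
  have "real (Suc j) ^ Suc j = real (Suc j) * (real j * (1 + 1 / real j)) ^ j"
    by (simp only: jj power_Suc)
  also have "\<dots> = real (Suc j) * real j ^ j * (1 + 1 / real j) ^ j"
    by (simp add: power_mult_distrib)
  also have "\<dots> \<le> real (Suc j) * (exp (real j - 1) * fact j) * exp 1"
    by (intro mult_mono e Suc.IH) auto
  also have "\<dots> = (exp (real j - 1) * exp 1) * (real (Suc j) * fact j)" by (simp only: ac_simps)
  also have "exp (real j - 1) * exp 1 = exp (real (Suc j) - 1)" by (simp add: exp_add[symmetric])
  also have "real (Suc j) * fact j = fact (Suc j)" by (simp only: fact_Suc of_nat_mult)
  finally show ?case .
qed

lemma binom_incr: "a \<le> b \<Longrightarrow> (a choose Suc r) + (b - a) * (a choose r) \<le> b choose Suc r"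
proof (induction b)
  case 0 then show ?case by simp
next
  case (Suc b)
  show ?case
  proof (cases "a = Suc b")
    case True then show ?thesis by simp
  next
    case False
    then have ab: "a \<le> b" using Suc by simp
    have "(a choose Suc r) + (Suc b - a) * (a choose r) = ((a choose Suc r) + (b - a) * (a choose r)) + (a choose r)"
      using ab by (simp add: Suc_diff_le)
    also have "\<dots> \<le> (b choose Suc r) + (b choose r)"
      using Suc.IH[OF ab] binomial_right_mono[OF ab, of r] by linarith
    also have "\<dots> = Suc b choose Suc r" by simp
    finally show ?thesis .
  qed
qed

lemma binom_decr:
  assumes L: "0 < L" "r \<le> L"
  shows "L + d \<le> b \<Longrightarrow> real (b choose r) * (1 - real r / real L)^d \<le> real ((b - d) choose r)"
proof (induction d)
  case 0 then show ?case by simp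
next
  case (Suc d)
  define a where "a = b - d"
  have aL: "a \<ge> L + 1" using Suc.prems a_def by simp
  have IH: "real (b choose r) * (1 - real r / real L)^d \<le> real (a choose r)" using Suc a_def by simp
  have nn: "0 \<le> 1 - real r / real L" using L by simp
  have id: "real (a - r) * real (a choose r) = real a * real ((a - 1) choose r)"
    using binomial_absorb_comp[of a r] by (metis of_nat_mult)
  have ap: "real a > 0" using aL by simp
  have "real (a - r) = real a - real r" using aL L by simp
  then have eq: "real ((a - 1) choose r) = real (a choose r) * (1 - real r / real a)"
    using id ap by (simp add: field_simps)
  have "real r / real a \<le> real r / real L" using aL L by (intro divide_left_mono) auto
  then have "real (a choose r) * (1 - real r / real L) \<le> real (a choose r) * (1 - real r / real a)"
    by (intro mult_left_mono) auto
  moreover have "real (b choose r) * (1 - real r / real L)^Suc d \<le> real (a choose r) * (1 - real r / real L)"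
  proof -
    have "real (b choose r) * (1 - real r / real L)^Suc d = (real (b choose r) * (1 - real r / real L)^d) * (1 - real r / real L)"
      by (simp add: algebra_simps)
    also have "\<dots> \<le> real (a choose r) * (1 - real r / real L)" by (rule mult_right_mono[OF IH nn])
    finally show ?thesis .
  qed
  ultimately have "real (b choose r) * (1 - real r / real L)^Suc d \<le> real ((a - 1) choose r)"
    using eq by linarith
  moreover have "b - Suc d = a - 1" using a_def by simp
  ultimately show ?case by simp
qed

lemma geo_tail: "k \<ge> 3 \<Longrightarrow> (\<Sum>j=4..k. (1/3::real)^(j-1)) = 1/18 - 3/2 * (1/3)^k"
proof (induction k rule: nat_induct_at_least)
  case base then show ?case by (simp add: power_one_over)
next
  case (Suc k)
  have "(\<Sum>j=4..Suc k. (1/3::real)^(j-1)) = (\<Sum>j=4..k. (1/3::real)^(j-1)) + (1/3)^k"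
    using Suc by (simp add: sum.cl_ivl_Suc)
  then show ?case using Suc by simp
qed

lemma e_gt: "exp 1 > (2.65::real)"
proof -
  have "exp 1 > (1 + 1/20) powr (20::real)" by (rule exp_1_gt_powr) simp
  also have "(1 + 1/20) powr (20::real) = (21/20::real) ^ 20"
    by (subst powr_realpow[symmetric]) auto
  moreover have "(21/20::real) ^ 20 > 2.65" by (simp add: power_divide)
  ultimately show ?thesis by linarith
qed


lemma e_facts: "25/(54*exp 1) + 512/(1458*exp 1^2) + 1/18 < (1 - 1/(3*exp 1))/(3::real)"
proof -
  define e where "e = exp (1::real)"
  have e: "e > 2.65" using e_gt e_def by simp
  have ep: "e > 0" using e by simp
  have a1: "25/(54*e) < 1748/10000" using e ep by (simp add: pos_divide_less_eq)
  have "2.65 * 2.65 < e * e" using e by (intro mult_strict_mono) auto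
  then have "e^2 > 7.0225" by (simp add: power2_eq_square)
  then have a2: "512/(1458*e^2) < 501/10000" using ep by (simp add: pos_divide_less_eq)
  have a3: "1/(3*e) < 126/1000" using e ep by (simp add: pos_divide_less_eq)
  have gen: "\<And>A B C::real. A < 1748/10000 \<Longrightarrow> B < 501/10000 \<Longrightarrow> C < 126/1000 \<Longrightarrow> A + B + 1/18 < (1 - C)/3"
    by argo
  show ?thesis unfolding e_def[symmetric] by (rule gen[OF a1 a2 a3])

qed

lemma g_sum:
  fixes u :: real
  defines "g \<equiv> \<lambda>j::nat. if j = 2 then 25/(54*exp 1) else if j = 3 then 512/(1458*exp 1^2) else (1/3::real)^(j-1)"
  shows "(\<Sum>j=2..k. g j) \<le> 25/(54*exp 1) + 512/(1458*exp 1^2) + 1/18"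
proof -
  have g2: "g 2 \<ge> 0" "g 3 \<ge> 0" unfolding g_def by auto
  consider "k < 2" | "k = 2" | "k \<ge> 3" by linarith
  then show ?thesis
  proof cases
    case 1 then show ?thesis by simp
  next
    case 2 then show ?thesis unfolding g_def by simp
  next
    case 3
    have "(\<Sum>j=2..k. g j) = g 2 + (g 3 + (\<Sum>j=4..k. g j))"
      using 3 by (simp add: sum.atLeast_Suc_atMost numeral_eq_Suc)
    also have "(\<Sum>j=4..k. g j) = (\<Sum>j=4..k. (1/3::real)^(j-1))"
      unfolding g_def by (rule sum.cong) auto
    also have "\<dots> = 1/18 - 3/2 * (1/3)^k" using geo_tail[OF 3] .
    finally show ?thesis unfolding g_def by simp
  qed
qed


lemma numeric_main:
  fixes n k q t :: nat
  assumes k: "k \<ge> 1" and q: "q \<ge> 1" and qt: "3*q < 2*t"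
    and n: "real n \<ge> 3 * exp 1 * real t * real k"
  shows "(\<Sum>j=2..k. ((q + t*(j-1) - 1) choose j) * ((n - j) choose (k - j))) + ((n + 1 - t) choose k)
          < (n + 1 - q) choose k"
proof -
  define e where "e = exp (1::real)"
  have e: "e > 2.65" using e_gt e_def by simp
  have ep: "e > 0" using e by simp
  have t2: "t \<ge> 2" using q qt by linarith
  have tkp: "real t * real k > 0" using t2 k by simp
  have n': "real n \<ge> (3 * e) * (real t * real k)" using n unfolding e_def by (simp add: ac_simps)
  have "(3 * e) * (real t * real k) \<ge> 2 * (real t * real k)"
    using e tkp by (intro mult_right_mono) auto
  then have "real n \<ge> real (2 * t * k)" using n' by simp
  then have n2: "n \<ge> 2 * t * k" by (simp only: of_nat_le_iff)
  have "t * k \<ge> t" "t * k \<ge> k" using k t2 by simp_all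
  then have ntk: "n \<ge> t + k" using n2 by linarith
  have npos: "real n > 0" using ntk k by simp
  define N1 where "N1 = real ((n-1) choose (k-1))"
  have N1p: "N1 > 0" unfolding N1_def using ntk by simp
  define u where "u = real t * real k / real n"
  have u0: "u \<ge> 0" unfolding u_def by simp
  have u1: "u \<le> 1 / (3 * e)"
    unfolding u_def using n' npos ep by (simp add: divide_simps ac_simps)
  have eu: "e * u \<le> 1/3"
  proof -
    have "e * u \<le> e * (1 / (3 * e))" using u1 ep by (intro mult_left_mono) auto
    then show ?thesis using ep by simp
  qed
  define g where "g \<equiv> \<lambda>j::nat. if j = 2 then 25/(54*exp 1) else if j = 3 then 512/(1458*exp 1^2) else (1/3::real)^(j-1)"
  have termb: "real (((q + t*(j-1) - 1) choose j) * ((n - j) choose (k - j))) \<le> N1 * real t * g j"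
    if j: "j \<in> {2..k}" for j
  proof -
    obtain i where i: "j = Suc i" using j by (cases j) auto
    have Lb: "real (q + t*(j-1) - 1) \<le> real t * (real j - 1/3)"
    proof -
      have "real (q + t*(j-1) - 1) = real q + real t * (real j - 1) - 1" using q j by (simp add: of_nat_diff)
      moreover have "3 * real q \<le> 2 * real t - 1" using qt by linarith
      ultimately show ?thesis by (simp add: algebra_simps)
    qed
    have c1: "real ((q + t*(j-1) - 1) choose j) \<le> (real t * (real j - 1/3))^j / fact j"
    proof -
      have "real ((q + t*(j-1) - 1) choose j) \<le> real (q + t*(j-1) - 1) ^ j / fact j"
        by (rule binom_le_pow_fact)
      also have "\<dots> \<le> (real t * (real j - 1/3))^j / fact j"
        by (intro divide_right_mono power_mono Lb) auto
      finally show ?thesis .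
    qed
    have c2: "real ((n - j) choose (k - j)) \<le> N1 * (real k / real n)^(j-1)"
      unfolding N1_def using binom_ratio[of k n j] j ntk by simp
    have "real (((q + t*(j-1) - 1) choose j) * ((n - j) choose (k - j)))
        \<le> (real t * (real j - 1/3))^j / fact j * (N1 * (real k / real n)^(j-1))"
    proof -
      have "real j - 1/3 \<ge> 0" using j by simp
      then have "0 \<le> (real t * (real j - 1/3))^j / fact j" by simp
      then show ?thesis unfolding of_nat_mult by (intro mult_mono c1 c2) auto
    qed
    also have "\<dots> = N1 * real t * ((real j - 1/3)^j / fact j * u^(j-1))"
    proof -
      have uu: "u = real t * (real k / real n)" unfolding u_def by simp
      have gen: "\<And>x::real. (real t * x)^(Suc i) / fact (Suc i) * (N1 * (real k / real n)^i)
          = N1 * real t * (x^(Suc i) / fact (Suc i) * (real t * (real k / real n))^i)"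
      proof -
        fix x :: real
        have pm: "(real t * (real k / real n))^i = real t ^ i * (real k / real n)^i" by (rule power_mult_distrib)
        show "(real t * x)^(Suc i) / fact (Suc i) * (N1 * (real k / real n)^i)
          = N1 * real t * (x^(Suc i) / fact (Suc i) * (real t * (real k / real n))^i)"
          unfolding pm by (simp add: power_mult_distrib ac_simps)
      qed
      show ?thesis unfolding uu i diff_Suc_1 by (rule gen)
    qed
    also have "\<dots> \<le> N1 * real t * g j"
    proof (rule mult_left_mono)
      show "0 \<le> N1 * real t" using N1p by simp
      consider "j = 2" | "j = 3" | "j \<ge> 4" using j by force
      then show "(real j - 1/3)^j / fact j * u^(j-1) \<le> g j"
      proof cases
        case 1
        have "(real j - 1/3)^j / fact j * u^(j-1) = 25/18 * u" using 1 by (simp add: power2_eq_square)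
        also have "\<dots> \<le> 25/18 * (1/(3*e))" using u1 by simp
        also have "\<dots> = g j" using 1 unfolding g_def e_def by simp
        finally show ?thesis .
      next
        case 2
        have "(real j - 1/3)^j / fact j * u^(j-1) = 256/81 * u^2" using 2
          by (simp add: power2_eq_square power3_eq_cube fact_numeral)
        also have "\<dots> \<le> 256/81 * (1/(3*e))^2" using u1 u0 by (intro mult_left_mono power_mono) auto
        also have "\<dots> = g j" using 2 unfolding g_def e_def by (simp add: power2_eq_square)
        finally show ?thesis .
      next
        case 3
        have "(real j - 1/3)^j \<le> real j ^ j" using 3 by (intro power_mono) auto
        also have "\<dots> \<le> exp (real j - 1) * fact j" using pow_self_le[of j] 3 by simp
        also have "exp (real j - 1) = e ^ (j - 1)"
          using 3 unfolding e_def by (simp add: exp_of_nat_mult[symmetric] of_nat_diff)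
        finally have "(real j - 1/3)^j \<le> e ^ (j - 1) * fact j" .
        then have "(real j - 1/3)^j / fact j \<le> e ^ (j - 1)" by (simp add: pos_divide_le_eq)
        then have "(real j - 1/3)^j / fact j * u^(j-1) \<le> e ^ (j - 1) * u^(j-1)"
          using u0 by (intro mult_right_mono) auto
        also have "\<dots> = (e * u)^(j-1)" by (simp add: power_mult_distrib)
        also have "\<dots> \<le> (1/3)^(j-1)" using eu ep u0 by (intro power_mono) auto
        also have "\<dots> = g j" using 3 unfolding g_def by simp
        finally show ?thesis .
      qed
    qed
    finally show ?thesis .
  qed
  have sumb: "real (\<Sum>j=2..k. ((q + t*(j-1) - 1) choose j) * ((n - j) choose (k - j)))
      \<le> N1 * real t * (25/(54*e) + 512/(1458*e^2) + 1/18)"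
  proof -
    have "real (\<Sum>j=2..k. ((q + t*(j-1) - 1) choose j) * ((n - j) choose (k - j)))
        = (\<Sum>j=2..k. real (((q + t*(j-1) - 1) choose j) * ((n - j) choose (k - j))))" by simp
    also have "\<dots> \<le> (\<Sum>j=2..k. N1 * real t * g j)" by (intro sum_mono termb)
    also have "\<dots> = N1 * real t * (\<Sum>j=2..k. g j)" by (simp add: sum_distrib_left)
    also have "\<dots> \<le> N1 * real t * (25/(54*e) + 512/(1458*e^2) + 1/18)"
      using g_sum[of k] N1p unfolding g_def e_def by (intro mult_left_mono) auto
    finally show ?thesis .
  qed
  have bi: "((n + 1 - t) choose Suc (k - 1)) + ((n + 1 - q) - (n + 1 - t)) * ((n + 1 - t) choose (k - 1))
      \<le> (n + 1 - q) choose Suc (k - 1)"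
    by (rule binom_incr) (use qt in linarith)
  have kk: "Suc (k - 1) = k" using k by simp
  have tq: "(n + 1 - q) - (n + 1 - t) = t - q" using qt ntk by linarith
  have bi': "real ((n + 1 - t) choose k) + real (t - q) * real ((n + 1 - t) choose (k - 1))
      \<le> real ((n + 1 - q) choose k)"
    using bi unfolding kk tq by (metis of_nat_add of_nat_le_iff of_nat_mult)
  define L where "L = n + 1 - t"
  have Lp: "0 < L" "k - 1 \<le> L" using ntk unfolding L_def by auto
  have bd: "real ((n - 1) choose (k - 1)) * (1 - real (k - 1) / real L)^(t - 2) \<le> real (((n - 1) - (t - 2)) choose (k - 1))"
    by (rule binom_decr[OF Lp]) (use ntk t2 in \<open>simp add: L_def\<close>)
  have nd: "(n - 1) - (t - 2) = n + 1 - t" using ntk t2 by linarith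
  have bern: "1 + real (t - 2) * (- (real (k - 1) / real L)) \<le> (1 + (- (real (k - 1) / real L)))^(t - 2)"
    by (rule Bernoulli_inequality) (use Lp in simp)
  have small: "real (t - 2) * (real (k - 1) / real L) \<le> 1 / (3 * e)"
  proof -
    have Lr: "real L = real n + 1 - real t" using ntk unfolding L_def by simp
    have LL: "real L > 0" using Lp by simp
    have "3 * e * (real (t - 2) * real (k - 1)) \<le> real L"
    proof -
      have eq: "3 * e * (real (t - 2) * real (k - 1)) = 3 * e * (real t * real k) - 3 * e * real t - 6 * e * real k + 6 * e"
        using t2 k by (simp add: of_nat_diff algebra_simps)
      have "e * real k \<ge> e * 1" using ep k by (intro mult_left_mono) auto
      moreover have "e * real t \<ge> 1 * real t" using e by (intro mult_right_mono) auto
      ultimately show ?thesis using eq Lr n' by linarith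
    qed
    then show ?thesis using LL ep by (simp add: divide_simps ac_simps)
  qed
  have C1: "real ((n + 1 - t) choose (k - 1)) \<ge> N1 * (1 - 1 / (3 * e))"
  proof -
    have "1 - 1 / (3 * e) \<le> 1 + real (t - 2) * (- (real (k - 1) / real L))" using small by simp
    also have "\<dots> \<le> (1 - real (k - 1) / real L)^(t - 2)" using bern by simp
    finally have "N1 * (1 - 1 / (3 * e)) \<le> N1 * (1 - real (k - 1) / real L)^(t - 2)"
      using N1p by (intro mult_left_mono) auto
    also have "\<dots> \<le> real ((n + 1 - t) choose (k - 1))" using bd nd unfolding N1_def by simp
    finally show ?thesis .
  qed
  have G: "25/(54*e) + 512/(1458*e^2) + 1/18 < (1 - 1/(3*e))/3" using e_facts unfolding e_def .
  have pos: "1 - 1/(3*e) > 0" using e by (simp add: divide_simps)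
  have tq3: "real t / 3 \<le> real (t - q)" using qt by linarith
  have "N1 * real t * (25/(54*e) + 512/(1458*e^2) + 1/18) < N1 * (real t * ((1 - 1/(3*e))/3))"
    using G N1p t2 by (simp add: mult.assoc)
  also have "\<dots> = N1 * ((real t / 3) * (1 - 1/(3*e)))" by simp
  also have "\<dots> \<le> N1 * (real (t - q) * (1 - 1/(3*e)))"
    using tq3 pos N1p by (intro mult_left_mono mult_right_mono) auto
  also have "\<dots> \<le> real (t - q) * real ((n + 1 - t) choose (k - 1))"
  proof -
    have "N1 * (real (t - q) * (1 - 1/(3*e))) = real (t - q) * (N1 * (1 - 1/(3*e)))" by (simp only: ac_simps)
    also have "\<dots> \<le> real (t - q) * real ((n + 1 - t) choose (k - 1))" using C1 by (intro mult_left_mono) auto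
    finally show ?thesis .
  qed
  finally have "real (\<Sum>j=2..k. ((q + t*(j-1) - 1) choose j) * ((n - j) choose (k - j)))
      < real (t - q) * real ((n + 1 - t) choose (k - 1))" using sumb by linarith
  then have "real ((\<Sum>j=2..k. ((q + t*(j-1) - 1) choose j) * ((n - j) choose (k - j))) + ((n + 1 - t) choose k))
      < real ((n + 1 - q) choose k)" using bi' by simp
  then show ?thesis by (simp only: of_nat_less_iff)
qed


lemma comb_mem:
  assumes sh: "shifted n k F" and A: "A \<in> F"
    and g: "\<forall>i j. 1 \<le> i \<longrightarrow> i < j \<longrightarrow> j \<le> k \<longrightarrow> g i < g j"
    and gs: "g ` {1..k} \<subseteq> {1..n}"
    and c: "\<forall>j\<in>{1..k}. card (A \<inter> {..<g j}) < j"
  shows "g ` {1..k} \<in> F"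
proof -
  have "A \<in> ksets {1..n} k" using sh A unfolding shifted_def by auto
  then have fA: "finite A" "card A = k" unfolding ksets_def by (auto intro: finite_subset)
  obtain f where "bij_betw f A (g ` {1..k})" "\<forall>x\<in>A. f x \<le> x"
    using dom_bij[OF g fA c] by blast
  then show ?thesis using sh A gs unfolding shifted_def by blast
qed

lemma shadow_last:
  assumes sh: "shifted n k F" and sn: "s + 1 \<le> n"
  shows "shadow (fam_empty s F) \<subseteq> fam_last s F"
proof
  fix B assume "B \<in> shadow (fam_empty s F)"
  then obtain A x where A: "A \<in> F" "A \<inter> {1..s+1} = {}" "x \<in> A" "B = A - {x}"
    unfolding shadow_def fam_empty_def by auto
  have An: "A \<subseteq> {1..n}" using sh A(1) unfolding shifted_def ksets_def by auto
  have xt: "x > s + 1" using A(2,3) An by force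
  have tA: "s + 1 \<notin> A" using A(2) by auto
  define A' where "A' = insert (s+1) (A - {x})"
  define f where "f = (\<lambda>y. if y = x then s + 1 else y)"
  have "bij_betw f A A'"
    unfolding bij_betw_def inj_on_def A'_def f_def using tA A(3) by auto
  moreover have "\<forall>y\<in>A. f y \<le> y" unfolding f_def using xt by auto
  moreover have "A' \<subseteq> {1..n}" unfolding A'_def using An sn by auto
  ultimately have "A' \<in> F" using sh A(1) unfolding shifted_def by blast
  moreover have "A' \<inter> {1..s+1} = {s+1}" unfolding A'_def using A(2) by auto
  moreover have "A' - {s+1} = B" unfolding A'_def using A(4) tA by auto
  ultimately show "B \<in> fam_last s F" unfolding fam_last_def by blast
qed

lemma resid:
  fixes a b t m m' :: nat
  assumes "1 \<le> a" "a \<le> t" "1 \<le> b" "b \<le> t" "a + t*m = b + t*m'"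
  shows "a = b"
proof (cases m m' rule: linorder_cases)
  case less
  then have "t * Suc m \<le> t * m'" by (intro mult_le_mono2) simp
  then have "t * m + t \<le> t * m'" by simp
  then show ?thesis using assms by linarith
next
  case greater
  then have "t * Suc m' \<le> t * m" by (intro mult_le_mono2) simp
  then have "t * m' + t \<le> t * m" by simp
  then show ?thesis using assms by linarith
next
  case equal then show ?thesis using assms by simp
qed

theorem lemma2:
  fixes s k n :: nat and F :: "nat \<Rightarrow> nat set set"
  assumes "k > 0" and "s > 2 * 10^6"
    and "n = nat \<lceil>3 * exp 1 * real (s + 1) * real k\<rceil>"
    and "\<forall>i\<in>{1..s+1}. shifted n k (F i)"
    and "cross_dependent s F"
    and "\<forall>i\<in>{1..s+1}. card (F i) \<ge> (n choose k) - ((n - s) choose k)"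
  shows "\<exists>U \<subseteq> {1..s+1}. 3 * card U \<ge> 2 * (s + 1) \<and>
           (\<forall>i\<in>U. card (fam_empty s (F i)) \<le> (3 * s + 2) * card (fam_last s (F i)))"
proof -
  note kpos = assms(1) and ndef = assms(3) and sh = assms(4) and cd = assms(5) and big = assms(6)
  define t where "t = s + 1"
  have t1: "t \<ge> 1" unfolding t_def by simp
  have nreal: "real n \<ge> 3 * exp 1 * real t * real k"
  proof -
    have "3 * exp 1 * real (s + 1) * real k \<ge> 0" by simp
    then show ?thesis unfolding ndef t_def by linarith
  qed
  have e: "exp 1 > (2.65::real)" by (rule e_gt)
  have tkp: "real t * real k > 0" using t1 kpos by simp
  have "(3 * exp 1) * (real t * real k) \<ge> 2 * (real t * real k)"
    using e tkp by (intro mult_right_mono) auto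
  then have "real n \<ge> real (2 * t * k)" using nreal by (simp add: ac_simps)
  then have n2: "n \<ge> 2 * t * k" by (simp only: of_nat_le_iff)
  have "t * k \<ge> t" using kpos by simp
  then have ntk: "n \<ge> t + t * k" using n2 by linarith
  define U where "U = {i\<in>{1..s+1}. card (fam_empty s (F i)) \<le> (3 * s + 2) * card (fam_last s (F i))}"
  have US: "U \<subseteq> {1..s+1}" unfolding U_def by auto
  show ?thesis
  proof (rule ccontr)
    assume neg: "\<not> ?thesis"
    have Uprop: "\<forall>i\<in>U. card (fam_empty s (F i)) \<le> (3 * s + 2) * card (fam_last s (F i))"
      unfolding U_def by auto
    have "\<not> (3 * card U \<ge> 2 * (s + 1))" using neg US Uprop by blast
    then have lt: "3 * card U < 2 * t" unfolding t_def by simp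
    define q where "q = card U"
    define I where "I = {1..t} - U"
    have fU: "finite U" using US by (rule finite_subset) simp
    have cI: "card I = t - q" unfolding I_def q_def t_def using US fU by (simp add: card_Diff_subset)
    have qt: "3 * q < 2 * t" using lt q_def by simp
    have Jmem: "(\<lambda>j. d + t*(j-1)) ` {1..k} \<in> F i" if i: "i \<in> {1..t}" and d: "d \<in> {1..q}" for i d
    proof -
      have q1: "q \<ge> 1" using d by simp
      have qn: "q \<le> n" using qt ntk by linarith
      have shi: "shifted n k (F i)" using sh i unfolding t_def by simp
      have bc: "card (Bad n k q t) \<le> ((n choose k) - ((n + 1 - q) choose k))
           + (\<Sum>j=2..k. ((q + t*(j-1) - 1) choose j) * ((n - j) choose (k - j)))"
        by (rule Bad_card) (use q1 qn kpos in auto)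
      have nm: "(\<Sum>j=2..k. ((q + t*(j-1) - 1) choose j) * ((n - j) choose (k - j))) + ((n + 1 - t) choose k)
          < (n + 1 - q) choose k"
        by (rule numeric_main) (use kpos q1 qt nreal in auto)
      have ns: "n - s = n + 1 - t" unfolding t_def by simp
      have mono: "(n + 1 - q) choose k \<le> n choose k" using q1 by (intro binomial_right_mono) simp
      have x1: "card (Bad n k q t) + ((n + 1 - t) choose k) < n choose k"
        using bc nm mono by linarith
      have "card (F i) \<ge> (n choose k) - ((n - s) choose k)" using big i unfolding t_def by blast
      then have x2: "card (F i) \<ge> (n choose k) - ((n + 1 - t) choose k)" by (simp only: ns)
      have lt2: "card (Bad n k q t) < card (F i)" using x1 x2 by linarith
      have finB: "finite (Bad n k q t)"
      proof (rule finite_subset)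
        show "Bad n k q t \<subseteq> Pow {1..n}" unfolding Bad_def ksets_def by auto
      qed simp
      have "\<not> F i \<subseteq> Bad n k q t"
      proof
        assume "F i \<subseteq> Bad n k q t"
        then have "card (F i) \<le> card (Bad n k q t)" by (rule card_mono[OF finB])
        then show False using lt2 by linarith
      qed
      then obtain A where A: "A \<in> F i" "A \<notin> Bad n k q t" by blast
      have Ak: "A \<in> ksets {1..n} k" using shi A unfolding shifted_def by auto
      have cA: "\<forall>j\<in>{1..k}. card (A \<inter> {..<q + t*(j-1)}) < j"
        using A(2) Ak unfolding Bad_def by (auto simp: not_le)
      have fA: "finite A" using Ak unfolding ksets_def by (auto intro: finite_subset)
      show ?thesis
      proof (rule comb_mem[OF shi A(1)])
        show "\<forall>i j. 1 \<le> i \<longrightarrow> i < j \<longrightarrow> j \<le> k \<longrightarrow> d + t*(i-1) < d + t*(j-1)"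
          using t1 by auto
        show "(\<lambda>j. d + t*(j-1)) ` {1..k} \<subseteq> {1..n}"
        proof
          fix x assume "x \<in> (\<lambda>j. d + t*(j-1)) ` {1..k}"
          then obtain j where j: "j \<in> {1..k}" "x = d + t*(j-1)" by auto
          have "j \<le> k" using j(1) by simp
          then have "j - 1 \<le> k" by linarith
          then have "t*(j-1) \<le> t*k" by (rule mult_le_mono2)
          moreover have "d \<le> q" "1 \<le> d" using d by auto
          ultimately have "x \<le> n" "1 \<le> x" using j(2) qt ntk by linarith+
          then show "x \<in> {1..n}" by simp
        qed
        show "\<forall>j\<in>{1..k}. card (A \<inter> {..<d + t*(j-1)}) < j"
        proof
          fix j assume j: "j \<in> {1..k}"
          have "card (A \<inter> {..<d + t*(j-1)}) \<le> card (A \<inter> {..<q + t*(j-1)})"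
            using d fA by (intro card_mono) auto
          moreover have "card (A \<inter> {..<q + t*(j-1)}) < j" using cA j by blast
          ultimately show "card (A \<inter> {..<d + t*(j-1)}) < j" by linarith
        qed
      qed
    qed
    have Imem: "(\<lambda>j. c + t*j) ` {1..k} \<in> F i" if i: "i \<in> I" and c: "c \<in> {1..t}" for i c
    proof -
      have iU: "i \<notin> U" "i \<in> {1..t}" using i unfolding I_def by auto
      have shi: "shifted n k (F i)" using sh iU unfolding t_def by simp
      define G where "G = fam_empty s (F i)"
      have Gs: "\<forall>A\<in>G. A \<subseteq> {t<..n} \<and> card A = k"
      proof
        fix A assume "A \<in> G"
        then have "A \<in> F i" "A \<inter> {1..t} = {}" unfolding G_def fam_empty_def t_def by auto
        moreover then have "A \<in> ksets {1..n} k" using shi unfolding shifted_def by auto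
        ultimately show "A \<subseteq> {t<..n} \<and> card A = k" unfolding ksets_def by force
      qed
      have "\<exists>A\<in>G. \<forall>j\<in>{1..k}. card (A \<inter> {t<..<t+(3*t)*j}) < j"
      proof (rule ccontr)
        assume "\<not> ?thesis"
        then have P: "\<forall>A\<in>G. \<exists>j\<in>{1..k}. j \<le> card (A \<inter> {t<..<t+(3*t)*j})" by (auto simp: not_less)
        have c1: "card G \<le> (3*t - 1) * card (shadow G)"
          by (rule shadow_bound[OF _ Gs P]) (use t1 in simp)
        have c2: "card (shadow G) \<le> card (fam_last s (F i))"
        proof (rule card_mono)
          show "shadow G \<subseteq> fam_last s (F i)" unfolding G_def
            by (rule shadow_last[OF shi]) (use ntk t_def in simp)
          have "F i \<subseteq> Pow {1..n}" using shi unfolding shifted_def ksets_def by auto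
          then have "finite (F i)" by (rule finite_subset) simp
          then show "finite (fam_last s (F i))" unfolding fam_last_def by simp
        qed
        have c3: "(3*t - 1) * card (shadow G) \<le> (3*t - 1) * card (fam_last s (F i))"
          using c2 by (rule mult_le_mono2)
        have eq3: "3*t - 1 = 3*s + 2" unfolding t_def by simp
        from c1 c3 have "card G \<le> (3*t - 1) * card (fam_last s (F i))" by (rule le_trans)
        then have "card G \<le> (3*s + 2) * card (fam_last s (F i))" by (simp only: eq3)
        then have "i \<in> U" using iU unfolding U_def G_def t_def by simp
        then show False using iU by simp
      qed
      then obtain A where A: "A \<in> G" "\<forall>j\<in>{1..k}. card (A \<inter> {t<..<t+(3*t)*j}) < j" by blast
      have AF: "A \<in> F i" using A(1) unfolding G_def fam_empty_def by auto
      have At: "A \<subseteq> {t<..n}" using Gs A(1) by auto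
      have fA: "finite A" using At by (rule finite_subset) simp
      show ?thesis
      proof (rule comb_mem[OF shi AF])
        show "\<forall>i j. 1 \<le> i \<longrightarrow> i < j \<longrightarrow> j \<le> k \<longrightarrow> c + t*i < c + t*j"
          using t1 by auto
        show "(\<lambda>j. c + t*j) ` {1..k} \<subseteq> {1..n}"
        proof
          fix x assume "x \<in> (\<lambda>j. c + t*j) ` {1..k}"
          then obtain j where j: "j \<in> {1..k}" "x = c + t*j" by auto
          have "j \<le> k" using j by simp
          then have "t*j \<le> t*k" by (rule mult_le_mono2)
          moreover have "c \<le> t" "1 \<le> c" using c by auto
          ultimately have "x \<le> n" "1 \<le> x" using j(2) ntk by linarith+
          then show "x \<in> {1..n}" by simp
        qed
        show "\<forall>j\<in>{1..k}. card (A \<inter> {..<c + t*j}) < j"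
        proof
          fix j assume j: "j \<in> {1..k}"
          have "t*j \<le> (3*t)*j" by simp
          then have cle: "c + t*j \<le> t + (3*t)*j" using c by simp
          have "A \<inter> {..<c + t*j} \<subseteq> A \<inter> {t<..<t+(3*t)*j}"
          proof
            fix x assume "x \<in> A \<inter> {..<c + t*j}"
            then have x: "x \<in> A" "x < c + t*j" by auto
            then have "t < x" using At by auto
            moreover have "x < t + (3*t)*j" using x(2) cle by linarith
            ultimately show "x \<in> A \<inter> {t<..<t+(3*t)*j}" using x(1) by simp
          qed
          then have "card (A \<inter> {..<c + t*j}) \<le> card (A \<inter> {t<..<t+(3*t)*j})"
            using fA by (intro card_mono) auto
          moreover have "card (A \<inter> {t<..<t+(3*t)*j}) < j" using A(2) j by blast
          ultimately show "card (A \<inter> {..<c + t*j}) < j" by linarith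
        qed
      qed
    qed
    have ceq1: "card U = card {1..q}" unfolding q_def by simp
    obtain h1 where h1: "bij_betw h1 U {1..q}"
      using finite_same_card_bij[OF fU finite_atLeastAtMost ceq1] by blast
    have fI: "finite I" unfolding I_def by simp
    have ceq2: "card I = card {q+1..t}" using cI by simp
    obtain h2 where h2: "bij_betw h2 I {q+1..t}"
      using finite_same_card_bij[OF fI finite_atLeastAtMost ceq2] by blast
    define sig where "sig = (\<lambda>i. if i \<in> U then h1 i else h2 i)"
    define sel where "sel = (\<lambda>i. if i \<in> U then (\<lambda>j. sig i + t*(j-1)) ` {1..k} else (\<lambda>j. sig i + t*j) ` {1..k})"
    have sigr: "sig i \<in> {1..t}" if "i \<in> {1..t}" for i
    proof (cases "i \<in> U")
      case True then have "h1 i \<in> {1..q}" using h1 by (auto simp: bij_betw_def)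
      then show ?thesis using True qt unfolding sig_def by auto
    next
      case False then have "i \<in> I" using that unfolding I_def by auto
      then have "h2 i \<in> {q+1..t}" using h2 by (auto simp: bij_betw_def)
      then show ?thesis using False unfolding sig_def by auto
    qed
    have siginj: "sig i = sig i' \<Longrightarrow> i \<in> {1..t} \<Longrightarrow> i' \<in> {1..t} \<Longrightarrow> i = i'" for i i'
    proof -
      assume eq: "sig i = sig i'" and ii: "i \<in> {1..t}" "i' \<in> {1..t}"
      have U1: "x \<in> U \<Longrightarrow> h1 x \<in> {1..q}" for x using h1 by (auto simp: bij_betw_def)
      have I2: "x \<in> I \<Longrightarrow> h2 x \<in> {q+1..t}" for x using h2 by (auto simp: bij_betw_def)
      show "i = i'"
      proof (cases "i \<in> U"; cases "i' \<in> U")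
        assume "i \<in> U" "i' \<in> U" then show ?thesis using eq h1 unfolding sig_def bij_betw_def inj_on_def by auto
      next
        assume a: "i \<in> U" "i' \<notin> U"
        then have "i' \<in> I" using ii unfolding I_def by auto
        then show ?thesis using eq a U1[of i] I2[of i'] unfolding sig_def by auto
      next
        assume a: "i \<notin> U" "i' \<in> U"
        then have "i \<in> I" using ii unfolding I_def by auto
        then show ?thesis using eq a U1[of i'] I2[of i] unfolding sig_def by auto
      next
        assume a: "i \<notin> U" "i' \<notin> U"
        then have "i \<in> I" "i' \<in> I" using ii unfolding I_def by auto
        then show ?thesis using eq a h2 unfolding sig_def bij_betw_def inj_on_def by auto
      qed
    qed
    have selform: "x \<in> sel i \<Longrightarrow> \<exists>m. x = sig i + t*m" for x i
      unfolding sel_def by (auto split: if_splits)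
    have selmem: "sel i \<in> F i" if i: "i \<in> {1..s+1}" for i
    proof (cases "i \<in> U")
      case True
      then have "h1 i \<in> {1..q}" using h1 by (auto simp: bij_betw_def)
      then show ?thesis using Jmem[of i "h1 i"] i True unfolding sel_def sig_def t_def by auto
    next
      case False
      then have iI: "i \<in> I" using i unfolding I_def t_def by auto
      have "sig i \<in> {1..t}" using sigr i unfolding t_def by auto
      then show ?thesis using Imem[OF iI] False unfolding sel_def by auto
    qed
    have seldisj: "sel i \<inter> sel j = {}" if "i \<in> {1..s+1}" "j \<in> {1..s+1}" "i \<noteq> j" for i j
    proof (rule ccontr)
      assume "sel i \<inter> sel j \<noteq> {}"
      then obtain x where "x \<in> sel i" "x \<in> sel j" by auto
      then obtain m m' where "x = sig i + t*m" "x = sig j + t*m'" using selform by metis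
      moreover have "sig i \<in> {1..t}" "sig j \<in> {1..t}" using sigr that unfolding t_def by auto
      ultimately have "sig i = sig j" using resid[of "sig i" t "sig j" m m'] by auto
      then show False using siginj that unfolding t_def by auto
    qed
    have "\<exists>G. (\<forall>i\<in>{1..s+1}. G i \<in> F i) \<and>
            (\<forall>i\<in>{1..s+1}. \<forall>j\<in>{1..s+1}. i \<noteq> j \<longrightarrow> G i \<inter> G j = {})"
      using selmem seldisj by blast
    then show False using cd unfolding cross_dependent_def by blast
  qed
qed

end
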